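(* Let $z$ be a binomial random variable with parameters $n\ge1$ and $\nu\in[0,1]$. For any $c\ge1$ with $c\nu<1$ and any $\lambda\in\big[0,\frac{\ln c}{(1-c\nu)(4n-3)}\big]$, $\mathbb{E}e^{\lambda z^2}\le e^{cn\nu(1+cn\nu)\lambda}$. *)

theory Defs
  imports "HOL-Probability.Probability"
begin

end

theory Submission
  imports Defs
begin

lemma binom_sum_rec:
  fixes p :: real and g :: "nat \<Rightarrow> real"
  shows "(\<Sum>k\<le>Suc m. real (Suc m choose k) * p ^ k * (1 - p) ^ (Suc m - k) * g k)
       = (\<Sum>k\<le>m. real (m choose k) * p ^ k * (1 - p) ^ (m - k) * ((1 - p) * g k + p * g (Suc k)))"
proof -
  define q where "q = 1 - p"
  define h where "h k = real (m choose k) * p ^ k * q ^ (Suc m - k) * g k" for k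
  have "(\<Sum>k\<le>Suc m. real (Suc m choose k) * p ^ k * q ^ (Suc m - k) * g k)
      = q ^ Suc m * g 0 + (\<Sum>k\<le>m. real (Suc m choose Suc k) * p ^ Suc k * q ^ (m - k) * g (Suc k))"
    by (subst sum.atMost_Suc_shift) simp
  also have "(\<Sum>k\<le>m. real (Suc m choose Suc k) * p ^ Suc k * q ^ (m - k) * g (Suc k))
     = (\<Sum>k\<le>m. h (Suc k)) + (\<Sum>k\<le>m. real (m choose k) * p ^ k * q ^ (m - k) * (p * g (Suc k)))"
    by (simp add: h_def sum.distrib[symmetric] algebra_simps)
  also have "q ^ Suc m * g 0 + ((\<Sum>k\<le>m. h (Suc k)) + X) = (\<Sum>k\<le>Suc m. h k) + X" for X
    by (subst sum.atMost_Suc_shift) (simp add: h_def)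
  also have "(\<Sum>k\<le>Suc m. h k) = (\<Sum>k\<le>m. h k)"
    by (simp add: h_def)
  also have "(\<Sum>k\<le>m. h k) = (\<Sum>k\<le>m. real (m choose k) * p ^ k * q ^ (m - k) * (q * g k))"
    by (intro sum.cong refl) (simp add: h_def Suc_diff_le)
  finally show ?thesis
    by (simp add: q_def sum.distrib[symmetric] algebra_simps)
qed

lemma factor_bound:
  fixes \<nu> c a :: real
  assumes "0 \<le> \<nu>" "c \<ge> 1" "c * \<nu> < 1" "0 \<le> a" "a \<le> ln c / (1 - c * \<nu>)"
  shows "1 - \<nu> + \<nu> * exp a \<le> exp (c * \<nu> * a)"
proof -
  define f where "f x = exp (c * \<nu> * x) - \<nu> * exp x" for x
  have "f 0 \<le> f a"
  proof (rule DERIV_nonneg_imp_nondecreasing[OF assms(4)])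
    fix x assume x: "0 \<le> x" "x \<le> a"
    have D: "DERIV f x :> c * \<nu> * exp (c * \<nu> * x) - \<nu> * exp x"
      unfolding f_def by (auto intro!: derivative_eq_intros)
    have "a * (1 - c * \<nu>) \<le> ln c"
      using x assms by (simp add: pos_le_divide_eq mult.commute)
    moreover have "(1 - c * \<nu>) * x \<le> a * (1 - c * \<nu>)"
      using x assms by (simp add: mult.commute mult_right_mono)
    ultimately have "(1 - c * \<nu>) * x \<le> ln c" by linarith
    hence "exp ((1 - c * \<nu>) * x) \<le> c"
      using assms(2) by (metis exp_le_cancel_iff exp_ln less_le_trans zero_less_one)
    hence "exp (c * \<nu> * x) * exp ((1 - c * \<nu>) * x) \<le> exp (c * \<nu> * x) * c"
      by simp
    hence "exp x \<le> c * exp (c * \<nu> * x)"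
      by (simp add: exp_add[symmetric] algebra_simps)
    hence "\<nu> * exp x \<le> \<nu> * (c * exp (c * \<nu> * x))"
      using assms(1) by (rule mult_left_mono)
    thus "\<exists>y. DERIV f x :> y \<and> 0 \<le> y"
      using D by (intro exI[of _ "c * \<nu> * exp (c * \<nu> * x) - \<nu> * exp x"]) (simp add: algebra_simps)
  qed
  thus ?thesis by (simp add: f_def)
qed

lemma main_induct:
  fixes \<nu> c lam :: real
  assumes "0 \<le> \<nu>" "\<nu> \<le> 1" "c \<ge> 1" "c * \<nu> < 1" "0 \<le> lam"
  shows "\<forall>t. 0 \<le> t \<longrightarrow> lam * (2 * real m - 1) + t \<le> ln c / (1 - c * \<nu>) \<longrightarrow>
     (\<Sum>k\<le>m. real (m choose k) * \<nu> ^ k * (1 - \<nu>) ^ (m - k) * exp (lam * (real k)\<^sup>2 + t * real k))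
     \<le> exp (c * \<nu> * (real m * lam + real m * t + c * \<nu> * lam * real m * (real m - 1)))"
proof (induction m)
  case 0
  then show ?case by simp
next
  case (Suc m)
  show ?case
  proof (intro allI impI)
    fix t :: real
    assume t: "0 \<le> t" "lam * (2 * real (Suc m) - 1) + t \<le> ln c / (1 - c * \<nu>)"
    define w where "w k = real (m choose k) * \<nu> ^ k * (1 - \<nu>) ^ (m - k)" for k
    have w0: "w k \<ge> 0" for k using assms by (simp add: w_def)
    have "(\<Sum>k\<le>Suc m. real (Suc m choose k) * \<nu> ^ k * (1 - \<nu>) ^ (Suc m - k) * exp (lam * (real k)\<^sup>2 + t * real k))
      = (\<Sum>k\<le>m. w k * ((1 - \<nu>) * exp (lam * (real k)\<^sup>2 + t * real k) + \<nu> * exp (lam * (real (Suc k))\<^sup>2 + t * real (Suc k))))"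
      by (subst binom_sum_rec) (simp add: w_def)
    also have "\<dots> = (\<Sum>k\<le>m. w k * exp (lam * (real k)\<^sup>2 + t * real k) * (1 - \<nu> + \<nu> * exp (lam * (2 * real k + 1) + t)))"
    proof (intro sum.cong refl)
      fix k
      have "exp (lam * (real (Suc k))\<^sup>2 + t * real (Suc k)) = exp (lam * (real k)\<^sup>2 + t * real k) * exp (lam * (2 * real k + 1) + t)"
        by (simp add: exp_add[symmetric] power2_eq_square algebra_simps)
      thus "w k * ((1 - \<nu>) * exp (lam * (real k)\<^sup>2 + t * real k) + \<nu> * exp (lam * (real (Suc k))\<^sup>2 + t * real (Suc k)))
          = w k * exp (lam * (real k)\<^sup>2 + t * real k) * (1 - \<nu> + \<nu> * exp (lam * (2 * real k + 1) + t))"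
        by (simp add: algebra_simps)
    qed
    also have "\<dots> \<le> (\<Sum>k\<le>m. w k * exp (lam * (real k)\<^sup>2 + t * real k) * exp (c * \<nu> * (lam * (2 * real k + 1) + t)))"
    proof (intro sum_mono mult_left_mono)
      fix k assume k: "k \<in> {..m}"
      have "lam * (2 * real k + 1) \<le> lam * (2 * real (Suc m) - 1)"
        using k assms(5) by (intro mult_left_mono) auto
      hence "lam * (2 * real k + 1) + t \<le> ln c / (1 - c * \<nu>)" using t by linarith
      thus "1 - \<nu> + \<nu> * exp (lam * (2 * real k + 1) + t) \<le> exp (c * \<nu> * (lam * (2 * real k + 1) + t))"
        using assms t by (intro factor_bound) auto
      show "0 \<le> w k * exp (lam * (real k)\<^sup>2 + t * real k)" using w0 by simp
    qed
    also have "\<dots> = exp (c * \<nu> * (lam + t)) *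
        (\<Sum>k\<le>m. real (m choose k) * \<nu> ^ k * (1 - \<nu>) ^ (m - k) * exp (lam * (real k)\<^sup>2 + (t + 2 * c * \<nu> * lam) * real k))"
      unfolding sum_distrib_left
    proof (intro sum.cong refl)
      fix k
      have "exp (lam * (real k)\<^sup>2 + t * real k) * exp (c * \<nu> * (lam * (2 * real k + 1) + t))
          = exp (c * \<nu> * (lam + t)) * exp (lam * (real k)\<^sup>2 + (t + 2 * c * \<nu> * lam) * real k)"
        by (simp add: exp_add[symmetric] algebra_simps)
      thus "w k * exp (lam * (real k)\<^sup>2 + t * real k) * exp (c * \<nu> * (lam * (2 * real k + 1) + t)) =
         exp (c * \<nu> * (lam + t)) * (real (m choose k) * \<nu> ^ k * (1 - \<nu>) ^ (m - k) * exp (lam * (real k)\<^sup>2 + (t + 2 * c * \<nu> * lam) * real k))"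
        by (simp add: w_def algebra_simps)
    qed
    also have "\<dots> \<le> exp (c * \<nu> * (lam + t)) * exp (c * \<nu> * (real m * lam + real m * (t + 2 * c * \<nu> * lam) + c * \<nu> * lam * real m * (real m - 1)))"
    proof (rule mult_left_mono)
      have cn: "0 \<le> c * \<nu>" "c * \<nu> \<le> 1" using assms by auto
      have "c * \<nu> * lam \<le> 1 * lam" using cn assms(5) by (intro mult_right_mono) auto
      hence "2 * c * \<nu> * lam \<le> 2 * lam" by simp
      hence "lam * (2 * real m - 1) + (t + 2 * c * \<nu> * lam) \<le> ln c / (1 - c * \<nu>)"
        using t by (simp add: algebra_simps)
      moreover have "0 \<le> c * \<nu> * lam" using cn assms(5) by simp
      hence "0 \<le> t + 2 * c * \<nu> * lam" using t by simp
      ultimately show "(\<Sum>k\<le>m. real (m choose k) * \<nu> ^ k * (1 - \<nu>) ^ (m - k) * exp (lam * (real k)\<^sup>2 + (t + 2 * c * \<nu> * lam) * real k))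
          \<le> exp (c * \<nu> * (real m * lam + real m * (t + 2 * c * \<nu> * lam) + c * \<nu> * lam * real m * (real m - 1)))"
        using Suc.IH by blast
    qed simp
    also have "\<dots> = exp (c * \<nu> * (real (Suc m) * lam + real (Suc m) * t + c * \<nu> * lam * real (Suc m) * (real (Suc m) - 1)))"
      by (simp add: exp_add[symmetric] algebra_simps)
    finally show "(\<Sum>k\<le>Suc m. real (Suc m choose k) * \<nu> ^ k * (1 - \<nu>) ^ (Suc m - k) * exp (lam * (real k)\<^sup>2 + t * real k))
     \<le> exp (c * \<nu> * (real (Suc m) * lam + real (Suc m) * t + c * \<nu> * lam * real (Suc m) * (real (Suc m) - 1)))" .
  qed
qed

theorem lemma7:
  fixes n :: nat and \<nu> c lam :: real
  assumes "n \<ge> 1"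
    and "0 \<le> \<nu>" and "\<nu> \<le> 1"
    and "c \<ge> 1" and "c * \<nu> < 1"
    and "0 \<le> lam"
    and "lam \<le> ln c / ((1 - c * \<nu>) * (4 * real n - 3))"
  shows "measure_pmf.expectation (binomial_pmf n \<nu>) (\<lambda>z. exp (lam * (real z)\<^sup>2))
           \<le> exp (c * real n * \<nu> * (1 + c * real n * \<nu>) * lam)"
proof -
  have pos: "0 < (1 - c * \<nu>) * (4 * real n - 3)" using assms by auto
  have "lam * ((1 - c * \<nu>) * (4 * real n - 3)) \<le> ln c"
    using assms(7) pos by (simp add: le_divide_eq)
  moreover have "lam * ((1 - c * \<nu>) * (2 * real n - 1)) \<le> lam * ((1 - c * \<nu>) * (4 * real n - 3))"
    using assms by (intro mult_left_mono) auto
  ultimately have "lam * (2 * real n - 1) * (1 - c * \<nu>) \<le> ln c" by (simp add: algebra_simps)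
  hence cond: "lam * (2 * real n - 1) + 0 \<le> ln c / (1 - c * \<nu>)"
    using assms(5) by (simp add: le_divide_eq)
  have "measure_pmf.expectation (binomial_pmf n \<nu>) (\<lambda>z. exp (lam * (real z)\<^sup>2))
      = (\<Sum>k\<le>n. real (n choose k) * \<nu> ^ k * (1 - \<nu>) ^ (n - k) * exp (lam * (real k)\<^sup>2 + 0 * real k))"
    using assms by (subst expectation_binomial_pmf') auto
  also have "\<dots> \<le> exp (c * \<nu> * (real n * lam + real n * 0 + c * \<nu> * lam * real n * (real n - 1)))"
    using main_induct[OF assms(2-6), of n] cond by blast
  also have "\<dots> \<le> exp (c * real n * \<nu> * (1 + c * real n * \<nu>) * lam)"
  proof -
    have "0 \<le> c * \<nu> * (c * \<nu> * lam * real n)" using assms by simp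
    hence "c * \<nu> * (c * \<nu> * lam * real n * (real n - 1)) \<le> c * \<nu> * (c * \<nu> * lam * real n * real n)"
      by (simp add: algebra_simps)
    thus ?thesis by (simp add: algebra_simps)
  qed
  finally show ?thesis .
qed

end
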